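(* Let $X\subseteq\{0,1\}^n$, $f:X\to\{0,1\}$, $c>0$, and let $\{\ket{v_{x,i}}\in\mathbb{R}^m\}_{x\in X,i\in[n]}$ be a real $f$-deciding vector set of size $A$. Let $\ket{\psi_x}$ ($f(x)=1$), $\ket{\phi_x}$ ($f(x)=0$), $\kappa$, $\{\ket{\zeta_j}\}_{j\in[\kappa]}$, $\alpha_{j,x}$, the set $V$, $\varepsilon$, $S$, and the compressed vectors $\ket{\psi_x'},\ket{\phi_x'},\ket{\zeta_j'}$ be as described in the context. Then: (1) for all $j,l\in[\kappa]$, $|\braket{\zeta_j'}{\zeta_l'}-\delta_{j,l}|\le 4\varepsilon$; (2) for all $j\in[\kappa]$ and $x\in f^{-1}(0)$, $|\braket{\zeta_j'}{\phi_x'}|\le 2\varepsilon(c+1)A$; (3) for all $x$ with $f(x)=1$, $\big|\|\ket{\psi_x'}\|^2-1\big|\le 4\varepsilon\kappa$, and for all $x$ with $f(x)=0$, $\big|\|\ket{\phi_x'}\|-1\big|\le 3\varepsilon$.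
   Context: An $f$-deciding vector set $\{\ket{v_{x,i}}\}$ satisfies $\sum_{i:x_i\ne y_i}\braket{v_{x,i}}{v_{y,i}}=1$ for all $x,y\in X$ with $f(x)\ne f(y)$; its size is $A=\max_{x}\sum_i\|\ket{v_{x,i}}\|^2$. Let $\mathcal{H}=\mathbb{R}\oplus(\mathbb{R}^n\otimes\mathbb{R}^m\otimes\mathbb{R}^2)$ with $\ket{\hat 0}$ a unit vector spanning the first summand. For $f(x)=1$ let $\ket{\psi_x}=\frac{1}{\sqrt{\nu_x}}\big(\ket{\hat0}+\frac{1}{\sqrt{cA}}\sum_{i}\ket{i}\ket{v_{x,i}}\ket{x_i}\big)$ with $\nu_x=1+\frac{1}{cA}\sum_i\|\ket{v_{x,i}}\|^2$ (so $\|\ket{\psi_x}\|=1$); for $f(x)=0$ let $\ket{\phi_x}=\frac{1}{\sqrt{\mu_x}}\big(\ket{\hat0}-\sqrt{cA}\sum_i\ket{i}\ket{v_{x,i}}\ket{\bar x_i}\big)$ with $\mu_x=1+cA\sum_i\|\ket{v_{x,i}}\|^2$, where $\bar x_i=1-x_i$. Let $\kappa$ be the dimension of $\operatorname{span}\{\ket{\psi_x}:f(x)=1\}$, let $\{\ket{\zeta_j}\}_{j\in[\kappa]}$ be an orthonormal basis of this span, and fix real numbers $\alpha_{j,x}$ with $\ket{\zeta_j}=\sum_{x:f(x)=1}\alpha_{j,x}\ket{\psi_x}$. For $j\in[\kappa],i\in[n],b\in\{0,1\}$ let $\ket{C_{j,i,b}}=\sum_{x:f(x)=1,x_i=b}\frac{\alpha_{j,x}}{\sqrt{\nu_x}}\ket{v_{x,i}}$,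 and let $V=\{\ket{C_{j,i,b}}\}\cup\{\ket{v_{y,i}}:f(y)=0,i\in[n]\}\subset\mathbb{R}^m$. Let $\varepsilon>0$ and let $S\in\mathbb{R}^{N\times m}$ satisfy $(1-\varepsilon)\|u-v\|^2\le\|Su-Sv\|^2\le(1+\varepsilon)\|u-v\|^2$ for all $u,v\in V\cup\{0\}$ (a Johnson–Lindenstrauss compression of $V\cup\{0\}$). Let $T=\ket{\hat0}\bra{\hat0}+I_n\otimes S\otimes I_2$, mapping $\mathcal H$ to $\mathbb{R}\oplus(\mathbb{R}^n\otimes\mathbb{R}^N\otimes\mathbb{R}^2)$, and set $\ket{\psi_x'}=T\ket{\psi_x}$, $\ket{\phi_x'}=T\ket{\phi_x}$, $\ket{\zeta_j'}=T\ket{\zeta_j}$. *)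

theory Defs
  imports "HOL-Analysis.Analysis"
begin

text \<open>Inputs x \<in> {0,1}^n are functions 'n \<Rightarrow> bool (index type 'n, |'n| = n);
  vectors in R^m are real^'m; the Hilbert space
  H = R \<oplus> (R^n \<otimes> R^m \<otimes> R^2) is real^(unit + 'n \<times> 'm \<times> bool),
  the first summand being the component Inl ().\<close>

type_synonym ('n, 'm) hspace = "real^(unit + 'n \<times> 'm \<times> bool)"

definition f_deciding :: "('n::finite \<Rightarrow> bool) set \<Rightarrow> (('n \<Rightarrow> bool) \<Rightarrow> bool)
    \<Rightarrow> (('n \<Rightarrow> bool) \<Rightarrow> 'n \<Rightarrow> real^'m::finite) \<Rightarrow> bool" where
  "f_deciding X f v \<longleftrightarrow>
     (\<forall>x\<in>X. \<forall>y\<in>X. f x \<noteq> f y \<longrightarrow> (\<Sum>i\<in>{i. x i \<noteq> y i}. v x i \<bullet> v y i) = 1)"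

definition sizeA :: "('n::finite \<Rightarrow> bool) set \<Rightarrow> (('n \<Rightarrow> bool) \<Rightarrow> 'n \<Rightarrow> real^'m::finite) \<Rightarrow> real" where
  "sizeA X v = Max ((\<lambda>x. \<Sum>i\<in>UNIV. (norm (v x i))\<^sup>2) ` X)"

definition hat0 :: "real^(unit + 'n::finite \<times> 'k::finite \<times> bool)" where
  "hat0 = (\<chi> k. case k of Inl _ \<Rightarrow> 1 | Inr _ \<Rightarrow> 0)"

definition tens :: "'n::finite \<Rightarrow> real^'k::finite \<Rightarrow> bool \<Rightarrow> real^(unit + 'n \<times> 'k \<times> bool)" where
  "tens i w b = (\<chi> k. case k of Inl _ \<Rightarrow> 0
       | Inr (i', j, b') \<Rightarrow> (if i' = i \<and> b' = b then w $ j else 0))"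

definition nu :: "real \<Rightarrow> real \<Rightarrow> (('n::finite \<Rightarrow> bool) \<Rightarrow> 'n \<Rightarrow> real^'m::finite) \<Rightarrow> ('n \<Rightarrow> bool) \<Rightarrow> real" where
  "nu c A v x = 1 + (1 / (c * A)) * (\<Sum>i\<in>UNIV. (norm (v x i))\<^sup>2)"

definition mu :: "real \<Rightarrow> real \<Rightarrow> (('n::finite \<Rightarrow> bool) \<Rightarrow> 'n \<Rightarrow> real^'m::finite) \<Rightarrow> ('n \<Rightarrow> bool) \<Rightarrow> real" where
  "mu c A v x = 1 + (c * A) * (\<Sum>i\<in>UNIV. (norm (v x i))\<^sup>2)"

definition psi :: "real \<Rightarrow> real \<Rightarrow> (('n::finite \<Rightarrow> bool) \<Rightarrow> 'n \<Rightarrow> real^'m::finite) \<Rightarrow> ('n \<Rightarrow> bool)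
    \<Rightarrow> ('n, 'm) hspace" where
  "psi c A v x = (1 / sqrt (nu c A v x)) *\<^sub>R
      (hat0 + (1 / sqrt (c * A)) *\<^sub>R (\<Sum>i\<in>UNIV. tens i (v x i) (x i)))"

definition phi :: "real \<Rightarrow> real \<Rightarrow> (('n::finite \<Rightarrow> bool) \<Rightarrow> 'n \<Rightarrow> real^'m::finite) \<Rightarrow> ('n \<Rightarrow> bool)
    \<Rightarrow> ('n, 'm) hspace" where
  "phi c A v x = (1 / sqrt (mu c A v x)) *\<^sub>R
      (hat0 - sqrt (c * A) *\<^sub>R (\<Sum>i\<in>UNIV. tens i (v x i) (\<not> x i)))"

definition Cvec :: "(nat \<Rightarrow> ('n \<Rightarrow> bool) \<Rightarrow> real) \<Rightarrow> real \<Rightarrow> real \<Rightarrow> ('n::finite \<Rightarrow> bool) set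
    \<Rightarrow> (('n \<Rightarrow> bool) \<Rightarrow> bool) \<Rightarrow> (('n \<Rightarrow> bool) \<Rightarrow> 'n \<Rightarrow> real^'m::finite) \<Rightarrow> nat \<Rightarrow> 'n \<Rightarrow> bool \<Rightarrow> real^'m" where
  "Cvec \<alpha> c A X f v j i b =
     (\<Sum>x\<in>{x\<in>X. f x \<and> x i = b}. (\<alpha> j x / sqrt (nu c A v x)) *\<^sub>R v x i)"

definition Vset :: "(nat \<Rightarrow> ('n \<Rightarrow> bool) \<Rightarrow> real) \<Rightarrow> real \<Rightarrow> real \<Rightarrow> ('n::finite \<Rightarrow> bool) set
    \<Rightarrow> (('n \<Rightarrow> bool) \<Rightarrow> bool) \<Rightarrow> (('n \<Rightarrow> bool) \<Rightarrow> 'n \<Rightarrow> real^'m::finite) \<Rightarrow> nat \<Rightarrow> (real^'m) set" where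
  "Vset \<alpha> c A X f v \<kappa> =
     {Cvec \<alpha> c A X f v j i b | j i b. j < \<kappa>} \<union> {v y i | y i. y \<in> X \<and> \<not> f y}"

text \<open>T = |0><0| + I_n \<otimes> S \<otimes> I_2, with S an N x m matrix.\<close>
definition Tmap :: "real^'m::finite^'N::finite \<Rightarrow> real^(unit + 'n::finite \<times> 'm \<times> bool)
    \<Rightarrow> real^(unit + 'n \<times> 'N \<times> bool)" where
  "Tmap S h = (\<chi> k. case k of Inl u \<Rightarrow> h $ Inl u
      | Inr (i, k', b) \<Rightarrow> (\<Sum>j\<in>UNIV. S $ k' $ j * h $ Inr (i, j, b)))"

end

theory Submission
  imports Defs
begin

definition blk :: "real^(unit + 'n::finite \<times> 'k::finite \<times> bool) \<Rightarrow> 'n \<Rightarrow> bool \<Rightarrow> real^'k" where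
  "blk h i b = (\<chi> j. h $ Inr (i, j, b))"

lemma inner_decomp:
  fixes h g :: "real^(unit + 'n::finite \<times> 'k::finite \<times> bool)"
  shows "h \<bullet> g = h $ Inl () * g $ Inl () + (\<Sum>i\<in>UNIV. \<Sum>b\<in>UNIV. blk h i b \<bullet> blk g i b)"
proof -
  have "h \<bullet> g = (\<Sum>k\<in>UNIV <+> UNIV. h $ k * g $ k)"
    by (simp add: inner_vec_def)
  also have "\<dots> = h $ Inl () * g $ Inl () + (\<Sum>p\<in>UNIV. h $ Inr p * g $ Inr p)"
    by (subst sum.Plus) (auto simp: UNIV_unit)
  also have "(\<Sum>p\<in>UNIV. h $ Inr p * g $ Inr p) = (\<Sum>i\<in>UNIV. \<Sum>q\<in>UNIV. h $ Inr (i,q) * g $ Inr (i,q))"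
    by (simp add: sum.cartesian_product UNIV_Times_UNIV[symmetric] del: UNIV_Times_UNIV)
  also have "\<dots> = (\<Sum>i\<in>UNIV. \<Sum>j\<in>UNIV. \<Sum>b\<in>UNIV. h $ Inr (i,j,b) * g $ Inr (i,j,b))"
    by (simp add: sum.cartesian_product UNIV_Times_UNIV[symmetric] del: UNIV_Times_UNIV)
  also have "\<dots> = (\<Sum>i\<in>UNIV. \<Sum>b\<in>UNIV. blk h i b \<bullet> blk g i b)"
    by (simp add: blk_def inner_vec_def sum.swap[where A = "UNIV::'k set"])
  finally show ?thesis .
qed

lemma blk_add[simp]: "blk (h + g) i b = blk h i b + blk g i b"
  by (simp add: blk_def vec_eq_iff)
lemma blk_diff[simp]: "blk (h - g) i b = blk h i b - blk g i b"
  by (simp add: blk_def vec_eq_iff)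
lemma blk_scale[simp]: "blk (r *\<^sub>R h) i b = r *\<^sub>R blk h i b"
  by (simp add: blk_def vec_eq_iff)
lemma blk_zero[simp]: "blk 0 i b = 0"
  by (simp add: blk_def vec_eq_iff)
lemma blk_sum: "blk (\<Sum>x\<in>F. h x) i b = (\<Sum>x\<in>F. blk (h x) i b)"
  by (induction F rule: infinite_finite_induct) auto
lemma blk_hat0[simp]: "blk hat0 i b = 0"
  by (simp add: blk_def hat0_def vec_eq_iff)
lemma blk_tens[simp]: "blk (tens i' w b') i b = (if i' = i \<and> b' = b then w else 0)"
  by (auto simp add: blk_def tens_def vec_eq_iff)
lemma blk_Tmap[simp]: "blk (Tmap S h) i b = S *v blk h i b"
  by (simp add: blk_def Tmap_def vec_eq_iff matrix_vector_mult_def)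
lemma Tmap_Inl[simp]: "Tmap S h $ Inl u = h $ Inl u"
  by (simp add: Tmap_def)
lemma hat0_Inl[simp]: "hat0 $ Inl u = 1"
  by (simp add: hat0_def)
lemma tens_Inl[simp]: "tens i w b $ Inl u = 0"
  by (simp add: tens_def)

lemma linear_Tmap: "linear (Tmap S)"
  by (auto simp: linear_iff Tmap_def vec_eq_iff sum.distrib algebra_simps sum_distrib_left split: sum.split)

lemma jl_inner:
  fixes S :: "real^'m::finite^'N::finite" and W :: "(real^'m) set"
  assumes JL: "\<forall>u\<in>W. \<forall>w\<in>W. (1 - \<epsilon>) * (norm (u - w))\<^sup>2 \<le> (norm (S *v u - S *v w))\<^sup>2 \<and>
               (norm (S *v u - S *v w))\<^sup>2 \<le> (1 + \<epsilon>) * (norm (u - w))\<^sup>2"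
    and W0: "0 \<in> W" and u: "u \<in> W" and w: "w \<in> W" and e: "\<epsilon> > 0"
  shows "\<bar>(S *v u) \<bullet> (S *v w) - u \<bullet> w\<bar> \<le> 3/2 * \<epsilon> * ((norm u)\<^sup>2 + (norm w)\<^sup>2)"
proof -
  have sq: "(norm (a - b))\<^sup>2 = (norm a)\<^sup>2 + (norm b)\<^sup>2 - 2 * (a \<bullet> b)" for a b :: "real^'k::finite"
    by (simp add: power2_norm_eq_inner inner_diff_left inner_diff_right inner_commute)
  have ab: "2 * \<bar>a \<bullet> b\<bar> \<le> (norm a)\<^sup>2 + (norm b)\<^sup>2" for a b :: "real^'k::finite"
  proof -
    have "\<bar>a \<bullet> b\<bar> \<le> norm a * norm b" by (rule Cauchy_Schwarz_ineq2)
    moreover have "2 * (norm a * norm b) \<le> (norm a)\<^sup>2 + (norm b)\<^sup>2"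
      using sum_squares_bound[of "norm a" "norm b"] by (simp add: power2_eq_square)
    ultimately show ?thesis by linarith
  qed
  have 1: "(1 - \<epsilon>) * (norm u)\<^sup>2 \<le> (norm (S *v u))\<^sup>2 \<and> (norm (S *v u))\<^sup>2 \<le> (1 + \<epsilon>) * (norm u)\<^sup>2"
    using JL u W0 by fastforce
  have 2: "(1 - \<epsilon>) * (norm w)\<^sup>2 \<le> (norm (S *v w))\<^sup>2 \<and> (norm (S *v w))\<^sup>2 \<le> (1 + \<epsilon>) * (norm w)\<^sup>2"
    using JL w W0 by fastforce
  have 3: "(1 - \<epsilon>) * (norm (u - w))\<^sup>2 \<le> (norm (S *v u - S *v w))\<^sup>2 \<and> (norm (S *v u - S *v w))\<^sup>2 \<le> (1 + \<epsilon>) * (norm (u - w))\<^sup>2"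
    using JL u w by blast
  have d: "(norm (u - w))\<^sup>2 \<le> 2 * (norm u)\<^sup>2 + 2 * (norm w)\<^sup>2"
    using sq[of u w] ab[of u w] by linarith
  have ed: "\<epsilon> * (norm (u - w))\<^sup>2 \<le> \<epsilon> * (2 * (norm u)\<^sup>2 + 2 * (norm w)\<^sup>2)"
    using d e by (intro mult_left_mono) auto
  show ?thesis
    using 1 2 3 ed sq[of u w] sq[of "S *v u" "S *v w"] by (auto simp: algebra_simps abs_le_iff)
qed

lemma jl_inner_scaled:
  fixes S :: "real^'m::finite^'N::finite" and W :: "(real^'m) set"
  assumes JL: "\<forall>u\<in>W. \<forall>w\<in>W. (1 - \<epsilon>) * (norm (u - w))\<^sup>2 \<le> (norm (S *v u - S *v w))\<^sup>2 \<and>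
               (norm (S *v u - S *v w))\<^sup>2 \<le> (1 + \<epsilon>) * (norm (u - w))\<^sup>2"
    and W0: "0 \<in> W" and u: "u \<in> W" and w: "w \<in> W" and e: "\<epsilon> > 0"
  shows "\<bar>(S *v (r *\<^sub>R u)) \<bullet> (S *v (s *\<^sub>R w)) - (r *\<^sub>R u) \<bullet> (s *\<^sub>R w)\<bar>
          \<le> \<bar>r * s\<bar> * (3/2 * \<epsilon> * ((norm u)\<^sup>2 + (norm w)\<^sup>2))"
proof -
  have "(S *v (r *\<^sub>R u)) \<bullet> (S *v (s *\<^sub>R w)) - (r *\<^sub>R u) \<bullet> (s *\<^sub>R w)
      = (r * s) * ((S *v u) \<bullet> (S *v w) - u \<bullet> w)"
    by (simp add: matrix_vector_mult_scaleR algebra_simps)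
  then have "\<bar>(S *v (r *\<^sub>R u)) \<bullet> (S *v (s *\<^sub>R w)) - (r *\<^sub>R u) \<bullet> (s *\<^sub>R w)\<bar>
      = \<bar>r * s\<bar> * \<bar>(S *v u) \<bullet> (S *v w) - u \<bullet> w\<bar>" by (simp only: abs_mult)
  then show ?thesis using mult_left_mono[OF jl_inner[OF JL W0 u w e], of "\<bar>r * s\<bar>"]
    by simp
qed

lemma jl_norm_scaled:
  fixes S :: "real^'m::finite^'N::finite" and W :: "(real^'m) set"
  assumes JL: "\<forall>u\<in>W. \<forall>w\<in>W. (1 - \<epsilon>) * (norm (u - w))\<^sup>2 \<le> (norm (S *v u - S *v w))\<^sup>2 \<and>
               (norm (S *v u - S *v w))\<^sup>2 \<le> (1 + \<epsilon>) * (norm (u - w))\<^sup>2"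
    and W0: "0 \<in> W" and u: "u \<in> W"
  shows "\<bar>(norm (S *v (s *\<^sub>R u)))\<^sup>2 - (norm (s *\<^sub>R u))\<^sup>2\<bar> \<le> \<epsilon> * (norm (s *\<^sub>R u))\<^sup>2"
proof -
  have 1: "(1 - \<epsilon>) * (norm u)\<^sup>2 \<le> (norm (S *v u))\<^sup>2 \<and> (norm (S *v u))\<^sup>2 \<le> (1 + \<epsilon>) * (norm u)\<^sup>2"
    using JL u W0 by fastforce
  have "\<bar>(norm (S *v u))\<^sup>2 - (norm u)\<^sup>2\<bar> \<le> \<epsilon> * (norm u)\<^sup>2" using 1 by (auto simp: algebra_simps)
  then have "s\<^sup>2 * \<bar>(norm (S *v u))\<^sup>2 - (norm u)\<^sup>2\<bar> \<le> s\<^sup>2 * (\<epsilon> * (norm u)\<^sup>2)"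
    by (intro mult_left_mono) auto
  moreover have "\<bar>s\<^sup>2 * (norm (S *v u))\<^sup>2 - s\<^sup>2 * (norm u)\<^sup>2\<bar> = s\<^sup>2 * \<bar>(norm (S *v u))\<^sup>2 - (norm u)\<^sup>2\<bar>"
    by (simp add: abs_mult right_diff_distrib[symmetric])
  moreover have "(norm (S *v (s *\<^sub>R u)))\<^sup>2 = s\<^sup>2 * (norm (S *v u))\<^sup>2"
    by (simp add: matrix_vector_mult_scaleR power_mult_distrib)
  moreover have "(norm (s *\<^sub>R u))\<^sup>2 = s\<^sup>2 * (norm u)\<^sup>2"
    by (simp add: power_mult_distrib)
  ultimately show ?thesis by (simp only:) (simp add: algebra_simps)
qed

lemma abs_dsum_le:
  fixes t :: "'a \<Rightarrow> 'b \<Rightarrow> real"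
  assumes "\<And>i b. \<bar>t i b\<bar> \<le> B i b"
  shows "\<bar>\<Sum>i\<in>I. \<Sum>b\<in>J. t i b\<bar> \<le> (\<Sum>i\<in>I. \<Sum>b\<in>J. B i b)"
proof -
  have "\<bar>\<Sum>i\<in>I. \<Sum>b\<in>J. t i b\<bar> \<le> (\<Sum>i\<in>I. \<bar>\<Sum>b\<in>J. t i b\<bar>)" by (rule sum_abs[of "\<lambda>i. \<Sum>b\<in>J. t i b"])
  also have "\<dots> \<le> (\<Sum>i\<in>I. \<Sum>b\<in>J. \<bar>t i b\<bar>)" by (intro sum_mono sum_abs)
  also have "\<dots> \<le> (\<Sum>i\<in>I. \<Sum>b\<in>J. B i b)" by (intro sum_mono assms)
  finally show ?thesis .
qed

lemma inner_if_left[simp]: "(if P then u else 0) \<bullet> w = (if P then u \<bullet> w else 0)"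
  by simp
lemma inner_if_right[simp]: "w \<bullet> (if P then u else 0) = (if P then w \<bullet> u else 0)"
  by simp
lemma sum_if_conj: fixes i :: "'i::finite" shows "(\<Sum>i'\<in>UNIV. if i' = i \<and> Q i' then w i' else 0) = (if Q i then w i else (0::'a::comm_monoid_add))"
proof -
  have "(\<Sum>i'\<in>UNIV. if i' = i \<and> Q i' then w i' else 0) = (\<Sum>i'\<in>UNIV. if i' = i then (if Q i then w i else 0) else 0)"
    by (rule sum.cong) auto
  then show ?thesis by simp
qed

lemma blk_psi: "blk (psi c A v x) i b = (1 / sqrt (nu c A v x) * (1 / sqrt (c * A))) *\<^sub>R (if x i = b then v x i else 0)"
  by (simp add: psi_def blk_sum sum_if_conj)

lemma blk_phi: "blk (phi c A v x) i b = (- (1 / sqrt (mu c A v x)) * sqrt (c * A)) *\<^sub>R (if (\<not> x i) = b then v x i else 0)"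
  by (simp add: phi_def blk_sum sum_if_conj)

lemma psi_Inl: "psi c A v x $ Inl () = 1 / sqrt (nu c A v x)"
  by (simp add: psi_def sum_component)

lemma phi_Inl: "phi c A v x $ Inl () = 1 / sqrt (mu c A v x)"
  by (simp add: phi_def sum_component)

lemma sum_bool_if: "(\<Sum>b\<in>UNIV. if (P::bool) = b then t else 0) = (t::'a::comm_monoid_add)"
  by (cases P) (simp_all add: UNIV_bool)

lemma sum_bool_blk: "(\<Sum>b\<in>UNIV. (k *\<^sub>R (if (P::bool) = b then u else 0)) \<bullet> (k' *\<^sub>R (if P = b then w else 0))) = k * k' * (u \<bullet> w)"
  by (cases P) (simp_all add: UNIV_bool)

lemma sum_bool_blk2: "(\<Sum>b\<in>UNIV. (k *\<^sub>R (if (P::bool) = b then u else 0)) \<bullet> (k' *\<^sub>R (if Q = b then w else 0)))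
   = (if P = Q then k * k' * (u \<bullet> w) else 0)"
  by (cases P; cases Q) (simp_all add: UNIV_bool)

lemma psi_norm:
  assumes "c > 0" "A \<ge> 0" "(\<Sum>i\<in>UNIV. (norm (v x i))\<^sup>2) \<ge> 0"
  shows "psi c A v x \<bullet> psi c A v x = 1"
proof -
  define a where "a = 1 / sqrt (nu c A v x)"
  define r where "r = 1 / sqrt (c * A)"
  define s where "s = (\<Sum>i\<in>UNIV. (norm (v x i))\<^sup>2)"
  have nu: "nu c A v x = 1 + (1 / (c * A)) * s" by (simp add: nu_def s_def)
  have nupos: "nu c A v x > 0" using assms unfolding nu s_def by (intro add_pos_nonneg) auto
  have "psi c A v x \<bullet> psi c A v x = a * a + (\<Sum>i\<in>UNIV. (a * r) * (a * r) * (v x i \<bullet> v x i))"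
    by (simp only: inner_decomp[of "psi c A v x"] psi_Inl blk_psi sum_bool_blk a_def r_def)
  also have "\<dots> = a * a * (1 + r * r * s)"
    by (simp add: s_def power2_norm_eq_inner sum_distrib_left algebra_simps)
  also have "a * a = 1 / nu c A v x" using nupos by (simp add: a_def)
  also have "r * r = 1 / (c * A)" using assms by (simp add: r_def)
  finally show ?thesis using nupos by (simp add: nu)
qed

lemma phi_norm:
  assumes "c > 0" "A \<ge> 0" "(\<Sum>i\<in>UNIV. (norm (v x i))\<^sup>2) \<ge> 0"
  shows "phi c A v x \<bullet> phi c A v x = 1"
proof -
  define a where "a = 1 / sqrt (mu c A v x)"
  define r where "r = - (1 / sqrt (mu c A v x)) * sqrt (c * A)"
  define s where "s = (\<Sum>i\<in>UNIV. (norm (v x i))\<^sup>2)"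
  have mu: "mu c A v x = 1 + (c * A) * s" by (simp add: mu_def s_def)
  have mupos: "mu c A v x > 0" using assms unfolding mu s_def by (intro add_pos_nonneg) auto
  have "phi c A v x \<bullet> phi c A v x = a * a + (\<Sum>i\<in>UNIV. r * r * (v x i \<bullet> v x i))"
    by (simp only: inner_decomp[of "phi c A v x"] phi_Inl blk_phi sum_bool_blk a_def r_def)
  also have "\<dots> = a * a + r * r * s"
    by (simp add: s_def power2_norm_eq_inner sum_distrib_left algebra_simps)
  also have "a * a = 1 / mu c A v x" using mupos by (simp add: a_def)
  also have "r * r = (c * A) / mu c A v x" using assms mupos by (simp add: r_def)
  finally show ?thesis using mupos by (simp add: mu field_simps)
qed

lemma psi_phi_orth:
  assumes "c > 0" "A > 0" "(\<Sum>i\<in>{i. y i \<noteq> x i}. v y i \<bullet> v x i) = 1"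
  shows "psi c A v y \<bullet> phi c A v x = 0"
proof -
  define a where "a = 1 / sqrt (nu c A v y)"
  define a' where "a' = 1 / sqrt (mu c A v x)"
  define r where "r = 1 / sqrt (c * A)"
  have rr: "r * sqrt (c * A) = 1" using assms by (simp add: r_def)
  have "psi c A v y \<bullet> phi c A v x = a * a' + (\<Sum>i\<in>UNIV. if y i = (\<not> x i) then
          (a * r) * (- a' * sqrt (c * A)) * (v y i \<bullet> v x i) else 0)"
    by (simp only: inner_decomp[of "psi c A v y"] psi_Inl phi_Inl blk_psi blk_phi sum_bool_blk2 a_def a'_def r_def)
  also have "\<dots> = a * a' - a * a' * (r * sqrt (c * A)) * (\<Sum>i\<in>{i. y i \<noteq> x i}. v y i \<bullet> v x i)"
  proof -
    have "(\<Sum>i\<in>UNIV. if y i = (\<not> x i) then (a * r) * (- a' * sqrt (c * A)) * (v y i \<bullet> v x i) else 0)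
        = (\<Sum>i\<in>{i. y i \<noteq> x i}. (a * r) * (- a' * sqrt (c * A)) * (v y i \<bullet> v x i))"
      by (subst sum.inter_filter[symmetric]) (auto intro!: sum.cong)
    then show ?thesis by (simp only: sum_distrib_left[symmetric]) (simp add: algebra_simps)
  qed
  also have "\<dots> = 0" using rr assms(3) by simp
  finally show ?thesis .
qed

lemma sum_delta_mult: "finite L \<Longrightarrow> (\<Sum>l\<in>L. g l * (if j = l then 1 else 0)) = (if j \<in> L then g j else (0::real))"
proof -
  assume "finite L"
  have "(\<Sum>l\<in>L. g l * (if j = l then 1 else 0)) = (\<Sum>l\<in>L. if j = l then g l else 0)"
    by (rule sum.cong) auto
  then show ?thesis using \<open>finite L\<close> by simp
qed

lemma sum_bool_norm: "(\<Sum>b\<in>UNIV. (norm (if (P::bool) = b then u else 0))\<^sup>2) = (norm u)\<^sup>2"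
  by (cases P) (simp_all add: UNIV_bool)

lemma abs_sqrt_le: "t \<ge> 0 \<Longrightarrow> \<bar>t - 1\<bar> \<le> \<bar>t\<^sup>2 - 1\<bar>" for t :: real
proof -
  assume t: "t \<ge> 0"
  have e: "t\<^sup>2 - 1 = (t - 1) * (t + 1)" by (simp add: power2_eq_square algebra_simps)
  have "\<bar>t\<^sup>2 - 1\<bar> = \<bar>t - 1\<bar> * (t + 1)" using t by (simp only: e abs_mult)
  moreover have "\<bar>t - 1\<bar> * t \<ge> 0" using t by simp
  ultimately show ?thesis by (simp add: algebra_simps)
qed

theorem lemma12:
  fixes X :: "('n::finite \<Rightarrow> bool) set"
    and f :: "('n \<Rightarrow> bool) \<Rightarrow> bool"
    and v :: "('n \<Rightarrow> bool) \<Rightarrow> 'n \<Rightarrow> real^'m::finite"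
    and c \<epsilon> A :: real
    and \<kappa> :: nat
    and \<zeta> :: "nat \<Rightarrow> ('n, 'm) hspace"
    and \<alpha> :: "nat \<Rightarrow> ('n \<Rightarrow> bool) \<Rightarrow> real"
    and S :: "real^'m^'N::finite"
  assumes c_pos: "c > 0"
    and eps_pos: "\<epsilon> > 0"
    and deciding: "f_deciding X f v"
    and A_def: "A = sizeA X v"
    and kappa_def: "\<kappa> = dim (span (psi c A v ` {x\<in>X. f x}))"
    and zeta_orthonormal: "\<forall>j<\<kappa>. \<forall>l<\<kappa>. \<zeta> j \<bullet> \<zeta> l = (if j = l then 1 else 0)"
    and zeta_span: "span (\<zeta> ` {..<\<kappa>}) = span (psi c A v ` {x\<in>X. f x})"
    and alpha: "\<forall>j<\<kappa>. \<zeta> j = (\<Sum>x\<in>{x\<in>X. f x}. \<alpha> j x *\<^sub>R psi c A v x)"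
    and JL: "\<forall>u\<in>Vset \<alpha> c A X f v \<kappa> \<union> {0}. \<forall>w\<in>Vset \<alpha> c A X f v \<kappa> \<union> {0}.
               (1 - \<epsilon>) * (norm (u - w))\<^sup>2 \<le> (norm (S *v u - S *v w))\<^sup>2 \<and>
               (norm (S *v u - S *v w))\<^sup>2 \<le> (1 + \<epsilon>) * (norm (u - w))\<^sup>2"
  shows "(\<forall>j<\<kappa>. \<forall>l<\<kappa>. \<bar>Tmap S (\<zeta> j) \<bullet> Tmap S (\<zeta> l) - (if j = l then 1 else 0)\<bar> \<le> 4 * \<epsilon>)
       \<and> (\<forall>j<\<kappa>. \<forall>x\<in>X. \<not> f x \<longrightarrow>
            \<bar>Tmap S (\<zeta> j) \<bullet> Tmap S (phi c A v x)\<bar> \<le> 2 * \<epsilon> * (c + 1) * A)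
       \<and> (\<forall>x\<in>X. f x \<longrightarrow> \<bar>(norm (Tmap S (psi c A v x)))\<^sup>2 - 1\<bar> \<le> 4 * \<epsilon> * real \<kappa>)
       \<and> (\<forall>x\<in>X. \<not> f x \<longrightarrow> \<bar>norm (Tmap S (phi c A v x)) - 1\<bar> \<le> 3 * \<epsilon>)"
proof -
  define P where "P = {x\<in>X. f x}"
  define W where "W = Vset \<alpha> c A X f v \<kappa> \<union> {0}"
  define r where "r = 1 / sqrt (c * A)"
  have JLW: "\<forall>u\<in>W. \<forall>w\<in>W. (1 - \<epsilon>) * (norm (u - w))\<^sup>2 \<le> (norm (S *v u - S *v w))\<^sup>2 \<and>
               (norm (S *v u - S *v w))\<^sup>2 \<le> (1 + \<epsilon>) * (norm (u - w))\<^sup>2"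
    using JL unfolding W_def .
  have W0: "0 \<in> W" by (simp add: W_def)
  have CW: "\<And>j i b. j < \<kappa> \<Longrightarrow> Cvec \<alpha> c A X f v j i b \<in> W" by (auto simp: W_def Vset_def)
  have vW: "\<And>y i Q. y \<in> X \<Longrightarrow> \<not> f y \<Longrightarrow> (if Q then v y i else 0) \<in> W"
    by (auto simp: W_def Vset_def)
  have Amax: "\<And>x. x \<in> X \<Longrightarrow> (\<Sum>i\<in>UNIV. (norm (v x i))\<^sup>2) \<le> A"
    unfolding A_def sizeA_def by (rule Max_ge) auto
  have snn: "\<And>x. 0 \<le> (\<Sum>i\<in>UNIV. (norm (v x i))\<^sup>2)" by (simp add: sum_nonneg)
  have Anonneg: "\<And>x. x \<in> X \<Longrightarrow> 0 \<le> A" using Amax snn order_trans by blast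
  have Pne: "P = {} \<Longrightarrow> \<kappa> = 0" by (simp add: kappa_def P_def[symmetric] dim_span)
  have psin: "\<And>x. x \<in> X \<Longrightarrow> psi c A v x \<bullet> psi c A v x = 1" using psi_norm c_pos Anonneg snn by blast
  have phin: "\<And>x. x \<in> X \<Longrightarrow> phi c A v x \<bullet> phi c A v x = 1" using phi_norm c_pos Anonneg snn by blast
  have Apos: "A > 0" if y: "y \<in> P" and x: "x \<in> X" "\<not> f x" for y x
  proof (rule ccontr)
    have dec: "(\<Sum>i\<in>{i. y i \<noteq> x i}. v y i \<bullet> v x i) = 1"
      using deciding y x by (auto simp: f_deciding_def P_def)
    assume "\<not> A > 0"
    then have "(\<Sum>i\<in>UNIV. (norm (v y i))\<^sup>2) = 0" using Amax[of y] y snn[of y] by (auto simp: P_def)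
    then have "\<forall>i\<in>UNIV. (norm (v y i))\<^sup>2 = 0" by (subst (asm) sum_nonneg_eq_0_iff) auto
    then have "\<forall>i. v y i = 0" by simp
    then show False using dec by simp
  qed
  have zorth: "\<zeta> j \<bullet> phi c A v x = 0" if j: "j < \<kappa>" and x: "x \<in> X" "\<not> f x" for j x
  proof -
    have "\<zeta> j \<bullet> phi c A v x = (\<Sum>y\<in>P. \<alpha> j y * (psi c A v y \<bullet> phi c A v x))"
      using alpha j by (simp add: inner_sum_left P_def)
    also have "\<dots> = 0"
    proof (rule sum.neutral, rule ballI)
      fix y assume y: "y \<in> P"
      have "(\<Sum>i\<in>{i. y i \<noteq> x i}. v y i \<bullet> v x i) = 1"
        using deciding y x by (auto simp: f_deciding_def P_def)
      then have "psi c A v y \<bullet> phi c A v x = 0" by (rule psi_phi_orth[OF c_pos Apos[OF y x]])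
      then show "\<alpha> j y * (psi c A v y \<bullet> phi c A v x) = 0" by simp
    qed
    finally show ?thesis .
  qed
  have zblk: "blk (\<zeta> j) i b = r *\<^sub>R Cvec \<alpha> c A X f v j i b" if j: "j < \<kappa>" for j i b
  proof -
    have "blk (\<zeta> j) i b = (\<Sum>y\<in>P. if y i = b then r *\<^sub>R ((\<alpha> j y / sqrt (nu c A v y)) *\<^sub>R v y i) else 0)"
      using alpha j by (auto simp: blk_sum blk_psi P_def r_def intro!: sum.cong)
    also have "\<dots> = r *\<^sub>R Cvec \<alpha> c A X f v j i b"
      by (simp add: Cvec_def sum.inter_filter[symmetric] P_def scaleR_sum_right conj_assoc)
    finally show ?thesis .
  qed
  have zblkn: "(\<Sum>i\<in>UNIV. \<Sum>b\<in>UNIV. (norm (blk (\<zeta> j) i b))\<^sup>2) \<le> 1" if j: "j < \<kappa>" for j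
  proof -
    have "1 = \<zeta> j \<bullet> \<zeta> j" using zeta_orthonormal j by simp
    also have "\<dots> = (\<zeta> j $ Inl ())\<^sup>2 + (\<Sum>i\<in>UNIV. \<Sum>b\<in>UNIV. (norm (blk (\<zeta> j) i b))\<^sup>2)"
      by (subst inner_decomp) (simp add: dot_square_norm power2_eq_square[of "\<zeta> j $ Inl ()"])
    finally show ?thesis by (smt (verit) zero_le_power2)
  qed
  have Tdiff: "Tmap S h \<bullet> Tmap S g - h \<bullet> g = (\<Sum>i\<in>UNIV. \<Sum>b\<in>UNIV.
      (S *v blk h i b) \<bullet> (S *v blk g i b) - blk h i b \<bullet> blk g i b)" for h g :: "('n, 'm) hspace"
  proof -
    have "Tmap S h \<bullet> Tmap S g = h $ Inl () * g $ Inl () + (\<Sum>i\<in>UNIV. \<Sum>b\<in>UNIV. (S *v blk h i b) \<bullet> (S *v blk g i b))"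
      by (simp only: inner_decomp[of "Tmap S h"] blk_Tmap Tmap_Inl)
    then show ?thesis by (simp add: inner_decomp[of h] sum_subtractf)
  qed
  have C1: "\<bar>Tmap S (\<zeta> j) \<bullet> Tmap S (\<zeta> l) - (if j = l then 1 else 0)\<bar> \<le> 4 * \<epsilon>"
    if j: "j < \<kappa>" and l: "l < \<kappa>" for j l
  proof -
    have "Tmap S (\<zeta> j) \<bullet> Tmap S (\<zeta> l) - (if j = l then 1 else 0) = Tmap S (\<zeta> j) \<bullet> Tmap S (\<zeta> l) - \<zeta> j \<bullet> \<zeta> l"
      using zeta_orthonormal j l by simp
    also have "\<dots> = (\<Sum>i\<in>UNIV. \<Sum>b\<in>UNIV. (S *v blk (\<zeta> j) i b) \<bullet> (S *v blk (\<zeta> l) i b) - blk (\<zeta> j) i b \<bullet> blk (\<zeta> l) i b)"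
      by (rule Tdiff)
    finally have eq: "Tmap S (\<zeta> j) \<bullet> Tmap S (\<zeta> l) - (if j = l then 1 else 0) = \<dots>" .
    have bnd: "\<bar>(S *v blk (\<zeta> j) i b) \<bullet> (S *v blk (\<zeta> l) i b) - blk (\<zeta> j) i b \<bullet> blk (\<zeta> l) i b\<bar>
        \<le> 3/2 * \<epsilon> * ((norm (blk (\<zeta> j) i b))\<^sup>2 + (norm (blk (\<zeta> l) i b))\<^sup>2)" for i b
    proof -
      have "\<bar>(S *v blk (\<zeta> j) i b) \<bullet> (S *v blk (\<zeta> l) i b) - blk (\<zeta> j) i b \<bullet> blk (\<zeta> l) i b\<bar>
          \<le> \<bar>r * r\<bar> * (3/2 * \<epsilon> * ((norm (Cvec \<alpha> c A X f v j i b))\<^sup>2 + (norm (Cvec \<alpha> c A X f v l i b))\<^sup>2))"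
        unfolding zblk[OF j] zblk[OF l] by (rule jl_inner_scaled[OF JLW W0 CW[OF j] CW[OF l] eps_pos])
      also have "\<dots> = 3/2 * \<epsilon> * ((norm (r *\<^sub>R Cvec \<alpha> c A X f v j i b))\<^sup>2 + (norm (r *\<^sub>R Cvec \<alpha> c A X f v l i b))\<^sup>2)"
        by (simp add: power_mult_distrib abs_mult power2_eq_square algebra_simps)
      finally show ?thesis by (simp only: zblk[OF j] zblk[OF l])
    qed
    have "\<bar>(\<Sum>i\<in>UNIV. \<Sum>b\<in>UNIV. (S *v blk (\<zeta> j) i b) \<bullet> (S *v blk (\<zeta> l) i b) - blk (\<zeta> j) i b \<bullet> blk (\<zeta> l) i b)\<bar>
        \<le> (\<Sum>i\<in>UNIV. \<Sum>b\<in>UNIV. 3/2 * \<epsilon> * ((norm (blk (\<zeta> j) i b))\<^sup>2 + (norm (blk (\<zeta> l) i b))\<^sup>2))"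
      by (rule abs_dsum_le[OF bnd])
    also have "\<dots> = 3/2 * \<epsilon> * ((\<Sum>i\<in>UNIV. \<Sum>b\<in>UNIV. (norm (blk (\<zeta> j) i b))\<^sup>2) + (\<Sum>i\<in>UNIV. \<Sum>b\<in>UNIV. (norm (blk (\<zeta> l) i b))\<^sup>2))"
      by (simp add: sum.distrib sum_distrib_left algebra_simps)
    also have "\<dots> \<le> 3/2 * \<epsilon> * (1 + 1)"
      using zblkn[OF j] zblkn[OF l] eps_pos by (intro mult_left_mono add_mono) auto
    finally show ?thesis using eq eps_pos by simp
  qed
  have C2: "\<bar>Tmap S (\<zeta> j) \<bullet> Tmap S (phi c A v x)\<bar> \<le> 2 * \<epsilon> * (c + 1) * A"
    if j: "j < \<kappa>" and x: "x \<in> X" "\<not> f x" for j x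
  proof -
    obtain y where y: "y \<in> P" using Pne j by fastforce
    have A0: "A > 0" by (rule Apos[OF y x])
    define s where "s = - (1 / sqrt (mu c A v x)) * sqrt (c * A)"
    define w where "w i b = (if (\<not> x i) = b then v x i else 0)" for i b
    have pblk: "blk (phi c A v x) i b = s *\<^sub>R w i b" for i b by (simp add: blk_phi s_def w_def)
    have wW: "w i b \<in> W" for i b unfolding w_def by (rule vW[OF x])
    have eq: "Tmap S (\<zeta> j) \<bullet> Tmap S (phi c A v x) = (\<Sum>i\<in>UNIV. \<Sum>b\<in>UNIV.
      (S *v blk (\<zeta> j) i b) \<bullet> (S *v blk (phi c A v x) i b) - blk (\<zeta> j) i b \<bullet> blk (phi c A v x) i b)"
      using Tdiff[of "\<zeta> j" "phi c A v x"] zorth[OF j x] by simp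
    have mu1: "mu c A v x \<ge> 1" using c_pos A0 snn[of x] by (simp add: mu_def)
    have rs: "\<bar>r * s\<bar> \<le> 1"
    proof -
      have "r * s = - (1 / sqrt (mu c A v x))" using c_pos A0 by (simp add: r_def s_def)
      then show ?thesis using mu1 by (simp add: divide_le_eq_1)
    qed
    have bnd: "\<bar>(S *v blk (\<zeta> j) i b) \<bullet> (S *v blk (phi c A v x) i b) - blk (\<zeta> j) i b \<bullet> blk (phi c A v x) i b\<bar>
        \<le> 3/2 * \<epsilon> * ((norm (Cvec \<alpha> c A X f v j i b))\<^sup>2 + (norm (w i b))\<^sup>2)" for i b
    proof -
      have "\<bar>(S *v blk (\<zeta> j) i b) \<bullet> (S *v blk (phi c A v x) i b) - blk (\<zeta> j) i b \<bullet> blk (phi c A v x) i b\<bar>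
          \<le> \<bar>r * s\<bar> * (3/2 * \<epsilon> * ((norm (Cvec \<alpha> c A X f v j i b))\<^sup>2 + (norm (w i b))\<^sup>2))"
        unfolding zblk[OF j] pblk by (rule jl_inner_scaled[OF JLW W0 CW[OF j] wW eps_pos])
      also have "\<dots> \<le> 1 * (3/2 * \<epsilon> * ((norm (Cvec \<alpha> c A X f v j i b))\<^sup>2 + (norm (w i b))\<^sup>2))"
        using rs eps_pos by (intro mult_right_mono) auto
      finally show ?thesis by simp
    qed
    have Cn: "(norm (Cvec \<alpha> c A X f v j i b))\<^sup>2 = (c * A) * (norm (blk (\<zeta> j) i b))\<^sup>2" for i b
      using c_pos A0 by (simp add: zblk[OF j] r_def power_mult_distrib power_divide)
    have wsum: "(\<Sum>i\<in>UNIV. \<Sum>b\<in>UNIV. (norm (w i b))\<^sup>2) = (\<Sum>i\<in>UNIV. (norm (v x i))\<^sup>2)"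
      by (simp add: w_def sum_bool_norm)
    have Csum: "(\<Sum>i\<in>UNIV. \<Sum>b\<in>UNIV. (norm (Cvec \<alpha> c A X f v j i b))\<^sup>2) = (c * A) * (\<Sum>i\<in>UNIV. \<Sum>b\<in>UNIV. (norm (blk (\<zeta> j) i b))\<^sup>2)"
      by (simp add: Cn sum_distrib_left)
    have "\<bar>Tmap S (\<zeta> j) \<bullet> Tmap S (phi c A v x)\<bar>
        \<le> (\<Sum>i\<in>UNIV. \<Sum>b\<in>UNIV. 3/2 * \<epsilon> * ((norm (Cvec \<alpha> c A X f v j i b))\<^sup>2 + (norm (w i b))\<^sup>2))"
      unfolding eq by (rule abs_dsum_le[OF bnd])
    also have "\<dots> = 3/2 * \<epsilon> * ((c * A) * (\<Sum>i\<in>UNIV. \<Sum>b\<in>UNIV. (norm (blk (\<zeta> j) i b))\<^sup>2) + (\<Sum>i\<in>UNIV. (norm (v x i))\<^sup>2))"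
      by (simp only: sum.distrib sum_distrib_left[symmetric] wsum Csum)
    also have "\<dots> \<le> 3/2 * \<epsilon> * ((c * A) * 1 + A)"
      using zblkn[OF j] Amax[OF x(1)] eps_pos c_pos A0 by (intro mult_left_mono add_mono) auto
    also have "\<dots> \<le> 2 * \<epsilon> * (c + 1) * A"
      using eps_pos c_pos A0 by (simp add: algebra_simps)
    finally show ?thesis .
  qed
  have C3: "\<bar>(norm (Tmap S (psi c A v x)))\<^sup>2 - 1\<bar> \<le> 4 * \<epsilon> * real \<kappa>"
    if x: "x \<in> X" "f x" for x
  proof -
    have xP: "x \<in> P" using x by (simp add: P_def)
    have "psi c A v x \<in> span (psi c A v ` P)" using xP by (intro span_base) auto
    then have "psi c A v x \<in> span (\<zeta> ` {..<\<kappa>})" using zeta_span by (simp add: P_def)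
    then obtain u where u: "psi c A v x = (\<Sum>z\<in>\<zeta> ` {..<\<kappa>}. u z *\<^sub>R z)"
      using span_finite[of "\<zeta> ` {..<\<kappa>}"] by auto
    have inj: "inj_on \<zeta> {..<\<kappa>}"
    proof (rule inj_onI)
      fix j l assume j: "j \<in> {..<\<kappa>}" and l: "l \<in> {..<\<kappa>}" and e: "\<zeta> j = \<zeta> l"
      have "\<zeta> j \<bullet> \<zeta> j = 1" using zeta_orthonormal j by auto
      then have "\<zeta> j \<bullet> \<zeta> l = 1" using e by simp
      then show "j = l" using zeta_orthonormal j l by (auto split: if_splits)
    qed
    define \<beta> where "\<beta> j = u (\<zeta> j)" for j
    have ps: "psi c A v x = (\<Sum>j<\<kappa>. \<beta> j *\<^sub>R \<zeta> j)"
      using u by (simp add: sum.reindex[OF inj] \<beta>_def)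
    have Tps: "Tmap S (psi c A v x) = (\<Sum>j<\<kappa>. \<beta> j *\<^sub>R Tmap S (\<zeta> j))"
      by (simp add: ps linear_sum[OF linear_Tmap] linear_cmul[OF linear_Tmap])
    have in1: "Tmap S (psi c A v x) \<bullet> Tmap S (psi c A v x) = (\<Sum>j<\<kappa>. \<Sum>l<\<kappa>. \<beta> j * \<beta> l * (Tmap S (\<zeta> j) \<bullet> Tmap S (\<zeta> l)))"
      by (simp add: Tps inner_sum_left inner_sum_right sum_distrib_left mult.assoc; intro sum.cong refl; simp add: inner_commute)
    have in2': "psi c A v x \<bullet> psi c A v x = (\<Sum>j<\<kappa>. \<Sum>l<\<kappa>. \<beta> j * \<beta> l * (\<zeta> j \<bullet> \<zeta> l))"
      by (simp add: ps inner_sum_left inner_sum_right sum_distrib_left mult.assoc; intro sum.cong refl; simp add: inner_commute)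
    have in2: "psi c A v x \<bullet> psi c A v x = (\<Sum>j<\<kappa>. \<Sum>l<\<kappa>. \<beta> j * \<beta> l * (if j = l then 1 else 0))"
      unfolding in2' using zeta_orthonormal by (intro sum.cong refl) auto
    have sb: "(\<Sum>j<\<kappa>. (\<beta> j)\<^sup>2) = 1"
    proof -
      have "1 = (\<Sum>j<\<kappa>. \<Sum>l<\<kappa>. \<beta> j * \<beta> l * (if j = l then 1 else 0))" using in2 psin[OF x(1)] by simp
      also have "\<dots> = (\<Sum>j<\<kappa>. \<beta> j * \<beta> j)" by (intro sum.cong refl) (simp add: sum_delta_mult)
      finally show ?thesis by (simp add: power2_eq_square)
    qed
    have eq: "(norm (Tmap S (psi c A v x)))\<^sup>2 - 1 = (\<Sum>j<\<kappa>. \<Sum>l<\<kappa>. \<beta> j * \<beta> l *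
        (Tmap S (\<zeta> j) \<bullet> Tmap S (\<zeta> l) - (if j = l then 1 else 0)))"
      using in1 in2 psin[OF x(1)] by (simp add: power2_norm_eq_inner right_diff_distrib sum_subtractf)
    have bnd: "\<bar>\<beta> j * \<beta> l * (Tmap S (\<zeta> j) \<bullet> Tmap S (\<zeta> l) - (if j = l then 1 else 0))\<bar>
        \<le> ((\<beta> j)\<^sup>2 + (\<beta> l)\<^sup>2) / 2 * (4 * \<epsilon>)" if "j \<in> {..<\<kappa>}" "l \<in> {..<\<kappa>}" for j l
    proof -
      have a: "\<bar>\<beta> j * \<beta> l\<bar> \<le> ((\<beta> j)\<^sup>2 + (\<beta> l)\<^sup>2) / 2"
        using sum_squares_bound[of "\<bar>\<beta> j\<bar>" "\<bar>\<beta> l\<bar>"] by (simp add: abs_mult power2_eq_square)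
      have b: "\<bar>Tmap S (\<zeta> j) \<bullet> Tmap S (\<zeta> l) - (if j = l then 1 else 0)\<bar> \<le> 4 * \<epsilon>"
        using C1 that by auto
      show ?thesis unfolding abs_mult[of "\<beta> j * \<beta> l"] using a b
        by (intro mult_mono) auto
    qed
    have "\<bar>(norm (Tmap S (psi c A v x)))\<^sup>2 - 1\<bar> \<le> (\<Sum>j<\<kappa>. \<Sum>l<\<kappa>. ((\<beta> j)\<^sup>2 + (\<beta> l)\<^sup>2) / 2 * (4 * \<epsilon>))"
    proof -
      have "\<bar>(norm (Tmap S (psi c A v x)))\<^sup>2 - 1\<bar> \<le> (\<Sum>j<\<kappa>. \<bar>\<Sum>l<\<kappa>. \<beta> j * \<beta> l *
        (Tmap S (\<zeta> j) \<bullet> Tmap S (\<zeta> l) - (if j = l then 1 else 0))\<bar>)"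
        unfolding eq by (rule sum_abs)
      also have "\<dots> \<le> (\<Sum>j<\<kappa>. \<Sum>l<\<kappa>. \<bar>\<beta> j * \<beta> l *
        (Tmap S (\<zeta> j) \<bullet> Tmap S (\<zeta> l) - (if j = l then 1 else 0))\<bar>)"
        by (intro sum_mono sum_abs)
      also have "\<dots> \<le> (\<Sum>j<\<kappa>. \<Sum>l<\<kappa>. ((\<beta> j)\<^sup>2 + (\<beta> l)\<^sup>2) / 2 * (4 * \<epsilon>))"
        by (intro sum_mono bnd)
      finally show ?thesis .
    qed
    also have "\<dots> = 2 * \<epsilon> * (\<Sum>j<\<kappa>. \<Sum>l<\<kappa>. (\<beta> j)\<^sup>2) + 2 * \<epsilon> * (\<Sum>j<\<kappa>. \<Sum>l<\<kappa>. (\<beta> l)\<^sup>2)"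
    proof -
      have "(\<Sum>j<\<kappa>. \<Sum>l<\<kappa>. ((\<beta> j)\<^sup>2 + (\<beta> l)\<^sup>2) / 2 * (4 * \<epsilon>))
          = (\<Sum>j<\<kappa>. \<Sum>l<\<kappa>. 2 * \<epsilon> * (\<beta> j)\<^sup>2 + 2 * \<epsilon> * (\<beta> l)\<^sup>2)"
        by (intro sum.cong refl) (simp add: algebra_simps)
      also have "\<dots> = 2 * \<epsilon> * (\<Sum>j<\<kappa>. \<Sum>l<\<kappa>. (\<beta> j)\<^sup>2) + 2 * \<epsilon> * (\<Sum>j<\<kappa>. \<Sum>l<\<kappa>. (\<beta> l)\<^sup>2)"
        by (simp only: sum.distrib sum_distrib_left[symmetric])
      finally show ?thesis .
    qed
    also have "(\<Sum>j<\<kappa>. \<Sum>l<\<kappa>. (\<beta> j)\<^sup>2) = real \<kappa>"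
      using sb by (simp add: sum_distrib_left[symmetric])
    also have "(\<Sum>j<\<kappa>. \<Sum>l<\<kappa>. (\<beta> l)\<^sup>2) = real \<kappa>"
      using sb by simp
    finally show ?thesis by simp
  qed
  have C4: "\<bar>norm (Tmap S (phi c A v x)) - 1\<bar> \<le> 3 * \<epsilon>" if x: "x \<in> X" "\<not> f x" for x
  proof -
    define s where "s = - (1 / sqrt (mu c A v x)) * sqrt (c * A)"
    define w where "w i b = (if (\<not> x i) = b then v x i else 0)" for i b
    have pblk: "blk (phi c A v x) i b = s *\<^sub>R w i b" for i b by (simp add: blk_phi s_def w_def)
    have wW: "w i b \<in> W" for i b unfolding w_def by (rule vW[OF x])
    have pn: "(\<Sum>i\<in>UNIV. \<Sum>b\<in>UNIV. (norm (blk (phi c A v x) i b))\<^sup>2) \<le> 1"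
    proof -
      have "1 = phi c A v x \<bullet> phi c A v x" using phin[OF x(1)] by simp
      also have "\<dots> = (phi c A v x $ Inl ())\<^sup>2 + (\<Sum>i\<in>UNIV. \<Sum>b\<in>UNIV. (norm (blk (phi c A v x) i b))\<^sup>2)"
        by (subst inner_decomp) (simp add: dot_square_norm power2_eq_square[of "phi c A v x $ Inl ()"])
      finally show ?thesis by (smt (verit) zero_le_power2)
    qed
    have eq: "(norm (Tmap S (phi c A v x)))\<^sup>2 - 1 = (\<Sum>i\<in>UNIV. \<Sum>b\<in>UNIV.
       (norm (S *v blk (phi c A v x) i b))\<^sup>2 - (norm (blk (phi c A v x) i b))\<^sup>2)"
      using Tdiff[of "phi c A v x" "phi c A v x"] phin[OF x(1)] by (simp add: dot_square_norm)
    have "\<bar>(norm (Tmap S (phi c A v x)))\<^sup>2 - 1\<bar> \<le> (\<Sum>i\<in>UNIV. \<Sum>b\<in>UNIV. \<epsilon> * (norm (blk (phi c A v x) i b))\<^sup>2)"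
      unfolding eq pblk by (rule abs_dsum_le, rule jl_norm_scaled[OF JLW W0 wW])
    also have "\<dots> = \<epsilon> * (\<Sum>i\<in>UNIV. \<Sum>b\<in>UNIV. (norm (blk (phi c A v x) i b))\<^sup>2)"
      by (simp add: sum_distrib_left)
    also have "\<dots> \<le> \<epsilon> * 1" using pn eps_pos by (intro mult_left_mono) auto
    finally have "\<bar>(norm (Tmap S (phi c A v x)))\<^sup>2 - 1\<bar> \<le> \<epsilon>" by simp
    then show ?thesis using abs_sqrt_le[of "norm (Tmap S (phi c A v x))"] eps_pos by simp
  qed
  show ?thesis using C1 C2 C3 C4 by blast
qed

end
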